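(* Let $\{P_\theta:\theta\in\Theta\}$ be a family of distributions on a measurable space $\mathbb{X}$, let $\mathcal{L}$ be a measurable nonnegative loss, and for an estimator $\varphi$ (a measurable function of finite sequences of elements of $\mathbb{X}$) define ${\sf risk}_n(\varphi,\theta)=\mathbb{E}_\theta[\mathcal{L}(\varphi(X_1,\dots,X_n),\theta)]$ with $X_1,\dots,X_n$ i.i.d. from $P_\theta$, ${\sf risk}_n(\varphi)=\sup_{\theta\in\Theta}{\sf risk}_n(\varphi,\theta)$, and the minimax risk $R(n)=\inf_\varphi {\sf risk}_n(\varphi)$, assumed finite for all $n$ large enough. Suppose $\limsup_{a\to\infty}\limsup_{n\to\infty} R(an)/R(n)=0$. Then for any estimator $\varphi$ that can be computed in $o(n)$ time when applied to a sample of size $n$, ${\sf risk}_n(\varphi)/R(n)\to\infty$ as $n\to\infty$.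
   Context: Computational model: it takes one unit of time to register (read) an observation for further processing, so an algorithm running in time $b(n)$ on a sample of size $n$ can read at most $b(n)$ observations, where the index of each observation read may depend on the values of previously read observations. *)

theory Defs
  imports "HOL-Probability.Probability"
begin

definition risk :: "('t \<Rightarrow> 'x measure) \<Rightarrow> ('b \<Rightarrow> 't \<Rightarrow> real) \<Rightarrow> nat
    \<Rightarrow> ((nat \<Rightarrow> 'x) \<Rightarrow> 'b) \<Rightarrow> 't \<Rightarrow> ennreal" where
  "risk P L n f \<theta> = (\<integral>\<^sup>+ x. ennreal (L (f x) \<theta>) \<partial>(PiM {..<n} (\<lambda>_. P \<theta>)))"

definition sup_risk :: "('t \<Rightarrow> 'x measure) \<Rightarrow> ('b \<Rightarrow> 't \<Rightarrow> real) \<Rightarrow> 't set \<Rightarrow> nat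
    \<Rightarrow> ((nat \<Rightarrow> 'x) \<Rightarrow> 'b) \<Rightarrow> ennreal" where
  "sup_risk P L \<Theta> n f = (SUP \<theta>\<in>\<Theta>. risk P L n f \<theta>)"

definition minimax :: "'x measure \<Rightarrow> 'b measure \<Rightarrow> ('t \<Rightarrow> 'x measure) \<Rightarrow> ('b \<Rightarrow> 't \<Rightarrow> real)
    \<Rightarrow> 't set \<Rightarrow> nat \<Rightarrow> ennreal" where
  "minimax M N P L \<Theta> n = (INF f \<in> measurable (PiM {..<n} (\<lambda>_. M)) N. sup_risk P L \<Theta> n f)"

text \<open>Adaptive reading of observations: q j v is the index of the (j+1)-th observation read,
  given the values v (on {..<j}) of the first j observations read.\<close>
primrec reads :: "(nat \<Rightarrow> (nat \<Rightarrow> 'x) \<Rightarrow> nat) \<Rightarrow> (nat \<Rightarrow> 'x) \<Rightarrow> nat \<Rightarrow> (nat \<Rightarrow> 'x)" where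
  "reads q x 0 = (\<lambda>_. undefined)"
| "reads q x (Suc j) = (reads q x j)(j := x (q j (reads q x j)))"

text \<open>The map f on samples of size n can be computed by an algorithm reading at most k
  observations (indices chosen adaptively).\<close>
definition computable_reading :: "'x measure \<Rightarrow> 'b measure \<Rightarrow> nat \<Rightarrow> nat
    \<Rightarrow> ((nat \<Rightarrow> 'x) \<Rightarrow> 'b) \<Rightarrow> bool" where
  "computable_reading M N n k f \<longleftrightarrow>
     (\<exists>q out.
        (\<forall>j<k. q j \<in> measurable (PiM {..<j} (\<lambda>_. M)) (count_space UNIV)
              \<and> (\<forall>v\<in>space (PiM {..<j} (\<lambda>_. M)). q j v < n))
      \<and> out \<in> measurable (PiM {..<k} (\<lambda>_. M)) N
      \<and> (\<forall>x\<in>space (PiM {..<n} (\<lambda>_. M)). f x = out (reads q x k)))"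

definition sublinear_time :: "'x measure \<Rightarrow> 'b measure \<Rightarrow> (nat \<Rightarrow> (nat \<Rightarrow> 'x) \<Rightarrow> 'b) \<Rightarrow> bool" where
  "sublinear_time M N \<phi> \<longleftrightarrow>
     (\<exists>b::nat \<Rightarrow> nat. (\<lambda>n. real (b n) / real n) \<longlonglongrightarrow> 0
        \<and> (\<forall>\<^sub>F n in sequentially. computable_reading M N n (b n) (\<phi> n)))"

end

theory Submission
  imports Defs
begin


lemma measurable_upd[measurable]:
  assumes "i \<in> I" "f \<in> measurable N (PiM I M)" "g \<in> measurable N (M i)"
  shows "(\<lambda>w. (f w)(i := g w)) \<in> measurable N (PiM I M)"
proof -
  have "(\<lambda>w j. (if j = i then g w else f w j)) \<in> measurable N (PiM I M)"
  proof (rule measurable_PiM_single')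
    fix j assume "j \<in> I" then show "(\<lambda>w. if j = i then g w else f w j) \<in> measurable N (M j)"
      using assms by (cases "j = i") auto
  next
    show "(\<lambda>w j. if j = i then g w else f w j) \<in> space N \<rightarrow> (\<Pi>\<^sub>E j\<in>I. space (M j))"
      using assms measurable_space[OF assms(2)] measurable_space[OF assms(3)]
      by (auto simp: space_PiM PiE_def extensional_def Pi_def)
  qed
  moreover have "(\<lambda>w j. (if j = i then g w else f w j)) = (\<lambda>w. (f w)(i := g w))" by (auto simp: fun_eq_iff)
  ultimately show ?thesis by simp
qed

lemma repl_coord:
  assumes Q: "prob_space Q" and I: "finite I" "i \<in> I"
    and H[measurable]: "H \<in> borel_measurable (PiM I (\<lambda>_. Q))"
  shows "(\<integral>\<^sup>+ a. (\<integral>\<^sup>+ x. H (x(i:=a)) \<partial>PiM I (\<lambda>_. Q)) \<partial>Q) = (\<integral>\<^sup>+ x. H x \<partial>PiM I (\<lambda>_. Q))"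
proof -
  interpret product_prob_space "\<lambda>_. Q" by (simp add: Q product_prob_space_def product_prob_space_axioms_def product_sigma_finite_def prob_space_imp_sigma_finite)
  interpret Q: prob_space Q by fact
  have ins: "I = insert i (I - {i})" using I by auto
  have "(\<integral>\<^sup>+ x. H x \<partial>PiM I (\<lambda>_. Q)) = (\<integral>\<^sup>+ a. (\<integral>\<^sup>+ y. H (y(i:=a)) \<partial>PiM (I-{i}) (\<lambda>_. Q)) \<partial>Q)"
    using I H by (subst ins, subst product_nn_integral_insert_rev) (auto simp: insert_absorb)
  also have "\<dots> = (\<integral>\<^sup>+ a. (\<integral>\<^sup>+ x. H (x(i:=a)) \<partial>PiM I (\<lambda>_. Q)) \<partial>Q)"
  proof (rule nn_integral_cong)
    fix a assume a: "a \<in> space Q"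
    have Ha: "(\<lambda>x. H (x(i:=a))) \<in> borel_measurable (PiM (insert i (I - {i})) (\<lambda>_. Q))"
      using a I by (simp add: insert_absorb) measurable
    have "(\<integral>\<^sup>+ x. H (x(i:=a)) \<partial>PiM I (\<lambda>_. Q)) = (\<integral>\<^sup>+ b. (\<integral>\<^sup>+ y. H ((y(i:=b))(i:=a)) \<partial>PiM (I-{i}) (\<lambda>_. Q)) \<partial>Q)"
      using I Ha by (subst ins, subst product_nn_integral_insert_rev) auto
    also have "\<dots> = (\<integral>\<^sup>+ b. (\<integral>\<^sup>+ y. H (y(i:=a)) \<partial>PiM (I-{i}) (\<lambda>_. Q)) \<partial>Q)" by simp
    also have "\<dots> = (\<integral>\<^sup>+ y. H (y(i:=a)) \<partial>PiM (I-{i}) (\<lambda>_. Q))"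
      by (simp add: prob_space.emeasure_space_1[OF Q])
    finally show "(\<integral>\<^sup>+ y. H (y(i:=a)) \<partial>PiM (I-{i}) (\<lambda>_. Q)) = (\<integral>\<^sup>+ x. H (x(i:=a)) \<partial>PiM I (\<lambda>_. Q))" by simp
  qed
  finally show ?thesis by simp
qed



primrec st :: "(nat \<Rightarrow> (nat \<Rightarrow> 'x) \<Rightarrow> nat) \<Rightarrow> (nat \<Rightarrow> 'x) \<Rightarrow> nat \<Rightarrow> (nat \<Rightarrow> 'x)" where
  "st q v 0 = (\<lambda>_. undefined)"
| "st q v (Suc j) = (st q v j)(j :=
     (if (LEAST l. l \<le> j \<and> q l (restrict (st q v j) {..<l}) = q j (st q v j)) < j
      then st q v j (LEAST l. l \<le> j \<and> q l (restrict (st q v j) {..<l}) = q j (st q v j))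
      else v j))"

definition W :: "(nat \<Rightarrow> (nat \<Rightarrow> 'x) \<Rightarrow> nat) \<Rightarrow> nat \<Rightarrow> (nat \<Rightarrow> 'x) \<Rightarrow> (nat \<Rightarrow> 'x) \<Rightarrow> (nat \<Rightarrow> 'x)" where
  "W q k x v = (\<lambda>i. if (\<exists>l<k. q l (st q v l) = i)
       then st q v k (LEAST l. l < k \<and> q l (st q v l) = i) else x i)"

lemma st_ext: "st q v j \<in> extensional {..<j}"
  by (induction j) (auto simp: extensional_def)

lemma st_restrict: "l \<le> j \<Longrightarrow> restrict (st q v j) {..<l} = st q v l"
proof (induction j)
  case 0
  then show ?case using st_ext[of q v 0] by (auto simp: restrict_def extensional_def fun_eq_iff)
next
  case (Suc j)
  show ?case
  proof (cases "l = Suc j")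
    case True
    then show ?thesis using st_ext[of q v "Suc j"] by (auto simp: restrict_def extensional_def fun_eq_iff)
  next
    case False
    then have "l \<le> j" using Suc by auto
    obtain c where c: "st q v (Suc j) = (st q v j)(j := c)" by simp
    have "restrict (st q v (Suc j)) {..<l} = restrict (st q v j) {..<l}"
      using \<open>l \<le> j\<close> unfolding c by (auto simp: restrict_def fun_eq_iff)
    then show ?thesis using Suc.IH \<open>l \<le> j\<close> by (simp only:)
  qed
qed

lemma st_val: "l < j \<Longrightarrow> st q v j l = st q v (Suc l) l"
  using st_restrict[of "Suc l" j q v] by (metis Suc_leI lessThan_iff lessI restrict_apply)

lemma st_LEAST_eq:
  "(LEAST l. l \<le> j \<and> q l (restrict (st q v j) {..<l}) = q j (st q v j))
   = (LEAST l. l \<le> j \<and> q l (st q v l) = q j (st q v j))"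
  by (rule arg_cong[where f=Least]) (auto simp: fun_eq_iff st_restrict)

lemma st_cong: "(\<And>l. l < j \<Longrightarrow> v l = v' l) \<Longrightarrow> st q v j = st q v' j"
proof (induction j)
  case (Suc j)
  then have "st q v j = st q v' j" by auto
  moreover have "v j = v' j" using Suc.prems by simp
  ultimately show ?case by (simp only: st.simps)
qed simp

lemma reads_W: "j \<le> k \<Longrightarrow> reads q (W q k x v) j = st q v j"
proof (induction j)
  case (Suc j)
  then have IH: "reads q (W q k x v) j = st q v j" by simp
  define i where "i = q j (st q v j)"
  define l0 where "l0 = (LEAST l. l < k \<and> q l (st q v l) = i)"
  define l1 where "l1 = (LEAST l. l \<le> j \<and> q l (st q v l) = i)"
  have jk: "j < k" using Suc by simp
  have ex: "\<exists>l<k. q l (st q v l) = i" using jk i_def by auto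
  have l1j: "l1 \<le> j \<and> q l1 (st q v l1) = i" unfolding l1_def by (rule LeastI[of _ j]) (simp add: i_def)
  have "l0 \<le> l1" unfolding l0_def using l1j jk by (intro Least_le) simp
  moreover have "l1 \<le> l0"
  proof -
    have "l0 < k \<and> q l0 (st q v l0) = i" unfolding l0_def by (rule LeastI[of _ j]) (simp add: i_def jk)
    moreover have "l0 \<le> j" using \<open>l0 \<le> l1\<close> l1j by simp
    ultimately show ?thesis unfolding l1_def by (intro Least_le) simp
  qed
  ultimately have l01: "l0 = l1" by simp
  have Wi: "W q k x v i = st q v k l0" using ex by (simp add: W_def l0_def)
  have stS: "st q v (Suc j) = (st q v j)(j := (if l1 < j then st q v j l1 else v j))"
    by (simp add: st_LEAST_eq l1_def i_def)
  have R: "reads q (W q k x v) (Suc j) = (st q v j)(j := W q k x v i)"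
    using IH by (simp add: i_def)
  have "st q v k l0 = (if l1 < j then st q v j l1 else v j)"
  proof (cases "l1 < j")
    case True
    then show ?thesis using l01 jk st_val[of l1 k q v] st_val[of l1 j q v] by (simp only: if_True)
  next
    case False
    then have "l1 = j" using l1j by simp
    then have "st q v k l0 = st q v (Suc j) j" using l01 jk st_val[of j k q v] by (simp only:)
    also have "\<dots> = v j" using stS False by simp
    finally show ?thesis using False by simp
  qed
  then show ?case using R Wi stS by simp
qed simp




lemma meas_eq_nat[measurable (raw)]:
  fixes f g :: "'a \<Rightarrow> nat"
  assumes [measurable]: "f \<in> measurable M (count_space UNIV)" "g \<in> measurable M (count_space UNIV)"
  shows "(\<lambda>x. f x = g x) \<in> measurable M (count_space UNIV)"
proof -
  have "(\<lambda>x. (\<lambda>i x. i = g x) (f x) x) \<in> measurable M (count_space UNIV)"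
    by (rule measurable_compose_countable'[where I=UNIV]) auto
  then show ?thesis by simp
qed

lemma st_space: "(\<And>l. l < j \<Longrightarrow> v l \<in> space M) \<Longrightarrow> st q v j \<in> space (PiM {..<j} (\<lambda>_. M))"
proof (induction j)
  case 0
  then show ?case by (simp add: space_PiM)
next
  case (Suc j)
  then have IH: "st q v j \<in> space (PiM {..<j} (\<lambda>_. M))" by simp
  obtain c where c: "st q v (Suc j) = (st q v j)(j := c)" and cs: "c \<in> space M"
  proof -
    let ?L = "(LEAST l. l \<le> j \<and> q l (restrict (st q v j) {..<l}) = q j (st q v j))"
    have "(if ?L < j then st q v j ?L else v j) \<in> space M"
      using IH Suc.prems by (auto simp: space_PiM)
    then show ?thesis using that by simp
  qed
  show ?case using IH cs unfolding c by (auto simp: space_PiM PiE_def extensional_def Pi_def)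
qed

lemma st_meas:
  assumes "j \<le> k" and q_meas: "\<And>l. l < k \<Longrightarrow> q l \<in> measurable (PiM {..<l} (\<lambda>_. M)) (count_space UNIV)"
  shows "(\<lambda>v. st q v j) \<in> measurable (PiM {..<k} (\<lambda>_. M)) (PiM {..<j} (\<lambda>_. M))"
  using assms(1)
proof (induction j)
  case 0
  then show ?case by (simp add: measurable_const space_PiM)
next
  case (Suc j)
  then have jk: "j < k" by simp
  have IH[measurable]: "(\<lambda>v. st q v j) \<in> measurable (PiM {..<k} (\<lambda>_. M)) (PiM {..<j} (\<lambda>_. M))"
    using Suc by simp
  define L where "L v = (LEAST l. l \<le> j \<and> q l (restrict (st q v j) {..<l}) = q j (st q v j))" for v
  define F where "F l v = (if l < j then st q v j l else v j)" for l and v :: "nat \<Rightarrow> 'a"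
  have Lm: "L \<in> measurable (PiM {..<k} (\<lambda>_. M)) (count_space UNIV)"
    unfolding L_def
  proof (rule measurable_Least)
    fix l
    show "(\<lambda>v. l \<le> j \<and> q l (restrict (st q v j) {..<l}) = q j (st q v j)) \<in> measurable (PiM {..<k} (\<lambda>_. M)) (count_space UNIV)"
    proof (cases "l \<le> j")
      case True
      have [measurable]: "q l \<in> measurable (PiM {..<l} (\<lambda>_. M)) (count_space UNIV)" using True jk q_meas by simp
      have [measurable]: "q j \<in> measurable (PiM {..<j} (\<lambda>_. M)) (count_space UNIV)" using True jk q_meas by simp
      have [measurable]: "(\<lambda>v. restrict (st q v j) {..<l}) \<in> measurable (PiM {..<k} (\<lambda>_. M)) (PiM {..<l} (\<lambda>_. M))"
        using True by (intro measurable_compose[OF IH measurable_restrict_subset]) auto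
      show ?thesis using True by measurable
    qed simp
  qed
  have Fm: "(\<lambda>v. F (L v) v) \<in> measurable (PiM {..<k} (\<lambda>_. M)) M"
  proof (rule measurable_compose_countable'[OF _ Lm])
    fix l
    show "F l \<in> measurable (PiM {..<k} (\<lambda>_. M)) M"
      unfolding F_def[abs_def] using jk by (cases "l < j") auto
  qed simp
  have eq: "(\<lambda>v. st q v (Suc j)) = (\<lambda>v i. if i = j then F (L v) v else st q v j i)"
    by (auto simp: fun_eq_iff F_def L_def)
  show ?case unfolding eq
  proof (rule measurable_PiM_single')
    fix i assume "i \<in> {..<Suc j}"
    then show "(\<lambda>v. if i = j then F (L v) v else st q v j i) \<in> measurable (PiM {..<k} (\<lambda>_. M)) M"
      using Fm by (cases "i = j") auto
  next
    show "(\<lambda>v i. if i = j then F (L v) v else st q v j i) \<in> space (PiM {..<k} (\<lambda>_. M)) \<rightarrow> (\<Pi>\<^sub>E i\<in>{..<Suc j}. space M)"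
      using measurable_space[OF Fm] measurable_space[OF IH] by (auto simp: space_PiM PiE_def Pi_def extensional_def)
  qed
qed




lemma W_meas:
  assumes q_meas: "\<And>l. l < k \<Longrightarrow> q l \<in> measurable (PiM {..<l} (\<lambda>_. M)) (count_space UNIV)"
    and q_bnd: "\<And>l s. l < k \<Longrightarrow> s \<in> space (PiM {..<l} (\<lambda>_. M)) \<Longrightarrow> q l s < n"
  shows "(\<lambda>p. W q k (snd p) (fst p)) \<in> measurable (PiM {..<k} (\<lambda>_. M) \<Otimes>\<^sub>M PiM {..<n} (\<lambda>_. M)) (PiM {..<n} (\<lambda>_. M))"
proof -
  let ?S = "PiM {..<k} (\<lambda>_. M) \<Otimes>\<^sub>M PiM {..<n} (\<lambda>_. M)"
  have stm: "\<And>j. j \<le> k \<Longrightarrow> (\<lambda>p. st q (fst p) j) \<in> measurable ?S (PiM {..<j} (\<lambda>_. M))"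
  proof -
    fix j assume "j \<le> k"
    from measurable_compose[OF measurable_fst st_meas[OF this q_meas]]
    show "(\<lambda>p. st q (fst p) j) \<in> measurable ?S (PiM {..<j} (\<lambda>_. M))" by (simp add: comp_def)
  qed
  define L where "L i p = (LEAST l. l = k \<or> (l < k \<and> q l (st q (fst p) l) = i))" for i and p :: "(nat \<Rightarrow> 'a) \<times> (nat \<Rightarrow> 'a)"
  define F where "F i l p = (if l < k then st q (fst p) k l else snd p i)" for i l and p :: "(nat \<Rightarrow> 'a) \<times> (nat \<Rightarrow> 'a)"
  have Lm: "L i \<in> measurable ?S (count_space UNIV)" for i
    unfolding L_def
  proof (rule measurable_Least)
    fix l
    show "(\<lambda>p. l = k \<or> (l < k \<and> q l (st q (fst p) l) = i)) \<in> measurable ?S (count_space UNIV)"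
    proof (cases "l < k")
      case True
      have [measurable]: "q l \<in> measurable (PiM {..<l} (\<lambda>_. M)) (count_space UNIV)" using True q_meas by simp
      have [measurable]: "(\<lambda>p. st q (fst p) l) \<in> measurable ?S (PiM {..<l} (\<lambda>_. M))" using True stm by simp
      show ?thesis using True by measurable
    qed simp
  qed
  have Fm: "(\<lambda>p. F i (L i p) p) \<in> measurable ?S M" if "i < n" for i
  proof (rule measurable_compose_countable'[OF _ Lm])
    fix l
    have [measurable]: "(\<lambda>p. st q (fst p) k) \<in> measurable ?S (PiM {..<k} (\<lambda>_. M))" using stm by simp
    show "F i l \<in> measurable ?S M"
      unfolding F_def[abs_def] using that by (cases "l < k") auto
  qed simp
  have eq: "W q k (snd p) (fst p) i = F i (L i p) p" for p i
  proof (cases "\<exists>l<k. q l (st q (fst p) l) = i")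
    case True
    define l0 where "l0 = (LEAST l. l < k \<and> q l (st q (fst p) l) = i)"
    have l0: "l0 < k \<and> q l0 (st q (fst p) l0) = i" using True unfolding l0_def by (rule LeastI_ex)
    have "L i p = l0" unfolding L_def
    proof (rule Least_equality)
      show "l0 = k \<or> (l0 < k \<and> q l0 (st q (fst p) l0) = i)" using l0 by simp
    next
      fix y assume "y = k \<or> (y < k \<and> q y (st q (fst p) y) = i)"
      then show "l0 \<le> y"
      proof
        assume "y = k" then show ?thesis using l0 by simp
      next
        assume "y < k \<and> q y (st q (fst p) y) = i" then show ?thesis unfolding l0_def by (rule Least_le)
      qed
    qed
    then show ?thesis using True l0 by (simp add: W_def F_def l0_def)
  next
    case False
    then have "L i p = k" unfolding L_def by (intro Least_equality) auto
    then show ?thesis using False by (auto simp: W_def F_def)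
  qed
  have "(\<lambda>p. \<lambda>i. F i (L i p) p) \<in> measurable ?S (PiM {..<n} (\<lambda>_. M))"
  proof (rule measurable_PiM_single')
    fix i assume "i \<in> {..<n}" then show "(\<lambda>p. F i (L i p) p) \<in> measurable ?S M" using Fm by simp
  next
    show "(\<lambda>p i. F i (L i p) p) \<in> space ?S \<rightarrow> (\<Pi>\<^sub>E i\<in>{..<n}. space M)"
    proof
      fix p assume p: "p \<in> space ?S"
      then have v: "fst p \<in> space (PiM {..<k} (\<lambda>_. M))" and x: "snd p \<in> space (PiM {..<n} (\<lambda>_. M))"
        by (auto simp: space_pair_measure)
      have vl: "fst p l \<in> space M" if "l < k" for l
        using v that unfolding space_PiM PiE_def Pi_def by blast
      have xl: "snd p i \<in> space M" if "i < n" for i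
        using x that unfolding space_PiM PiE_def Pi_def by blast
      have xu: "snd p i = undefined" if "i \<notin> {..<n}" for i
        using x that unfolding space_PiM PiE_def extensional_def by blast
      have stl: "st q (fst p) l \<in> space (PiM {..<l} (\<lambda>_. M))" if "l \<le> k" for l
      proof (rule st_space)
        fix l' assume "l' < l" then show "fst p l' \<in> space M" using vl that by simp
      qed
      have stk: "st q (fst p) k l \<in> space M" if "l < k" for l
        using stl[of k] that unfolding space_PiM PiE_def Pi_def by blast
      show "(\<lambda>i. F i (L i p) p) \<in> (\<Pi>\<^sub>E i\<in>{..<n}. space M)"
      proof (unfold PiE_def, intro IntI)
        show "(\<lambda>i. F i (L i p) p) \<in> Pi {..<n} (\<lambda>_. space M)"
        proof
          fix i assume "i \<in> {..<n}"
          then show "F i (L i p) p \<in> space M"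
            unfolding F_def using stk xl by (cases "L i p < k") auto
        qed
        show "(\<lambda>i. F i (L i p) p) \<in> extensional {..<n}"
        proof (unfold extensional_def, intro CollectI allI impI)
          fix i assume i: "i \<notin> {..<n}"
          have "\<not> (\<exists>l<k. q l (st q (fst p) l) = i)"
          proof
            assume "\<exists>l<k. q l (st q (fst p) l) = i"
            then obtain l where "l < k" "q l (st q (fst p) l) = i" by blast
            moreover have "q l (st q (fst p) l) < n" using q_bnd[OF \<open>l < k\<close> stl] \<open>l < k\<close> by simp
            ultimately show False using i by simp
          qed
          then have "W q k (snd p) (fst p) i = snd p i" by (auto simp: W_def)
          then show "F i (L i p) p = undefined" using eq[of p i] xu[OF i] by simp
        qed
      qed
    qed
  qed
  moreover have "(\<lambda>p. W q k (snd p) (fst p)) = (\<lambda>p. \<lambda>i. F i (L i p) p)" using eq by (auto simp: fun_eq_iff)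
  ultimately show ?thesis by simp
qed

lemma W_Suc:
  "W q (Suc k) x (u(k:=a)) = (if (\<exists>l<k. q l (st q u l) = q k (st q u k)) then W q k x u
      else (W q k x u)(q k (st q u k) := a))"
proof -
  define i where "i = q k (st q u k)"
  have sc: "st q (u(k:=a)) l = st q u l" if "l \<le> k" for l using that by (intro st_cong) auto
  define L where "L = (LEAST l. l \<le> k \<and> q l (restrict (st q u k) {..<l}) = q k (st q u k))"
  have L': "L = (LEAST l. l \<le> k \<and> q l (st q u l) = i)" unfolding L_def i_def by (rule st_LEAST_eq)
  have sS: "st q (u(k:=a)) (Suc k) = (st q u k)(k := (if L < k then st q u k L else a))"
    using sc[of k] by (simp add: L_def)
  have Lk: "L < k \<longleftrightarrow> (\<exists>l<k. q l (st q u l) = i)"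
  proof
    assume "L < k" then show "\<exists>l<k. q l (st q u l) = i"
      using L' by (metis (mono_tags, lifting) LeastI order.refl i_def)
  next
    assume "\<exists>l<k. q l (st q u l) = i"
    then obtain l where "l < k" "q l (st q u l) = i" by auto
    then have "L \<le> l" unfolding L' by (intro Least_le) simp
    then show "L < k" using \<open>l < k\<close> by simp
  qed
  have Lp: "L \<le> k \<and> q L (st q u L) = i" unfolding L' by (rule LeastI[of _ k]) (simp add: i_def)
  show ?thesis unfolding i_def[symmetric]
  proof (rule ext)
    fix i'
    show "W q (Suc k) x (u(k:=a)) i' = (if (\<exists>l<k. q l (st q u l) = i) then W q k x u else (W q k x u)(i := a)) i'"
    proof (cases "\<exists>l<k. q l (st q u l) = i'")
      case True
      define l0 where "l0 = (LEAST l. l < k \<and> q l (st q u l) = i')"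
      have l0: "l0 < k \<and> q l0 (st q u l0) = i'" using True unfolding l0_def by (metis (mono_tags, lifting) LeastI)
      have "(LEAST l. l < Suc k \<and> q l (st q (u(k:=a)) l) = i') = l0"
      proof (rule Least_equality)
        show "l0 < Suc k \<and> q l0 (st q (u(k:=a)) l0) = i'" using l0 sc[of l0] by simp
      next
        fix y assume y: "y < Suc k \<and> q y (st q (u(k:=a)) y) = i'"
        show "l0 \<le> y"
        proof (cases "y < k")
          case True
          then show ?thesis using y sc[of y] unfolding l0_def by (intro Least_le) simp
        next
          case False
          then show ?thesis using l0 by simp
        qed
      qed
      then have "W q (Suc k) x (u(k:=a)) i' = st q (u(k:=a)) (Suc k) l0"
      proof -
        have "\<exists>l<Suc k. q l (st q (u(k:=a)) l) = i'" using l0 sc[of l0] by (intro exI[of _ l0]) simp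
        then show ?thesis using \<open>(LEAST l. l < Suc k \<and> q l (st q (u(k:=a)) l) = i') = l0\<close>
          unfolding W_def by simp
      qed
      also have "\<dots> = st q u k l0" using sS l0 by simp
      also have "\<dots> = W q k x u i'" using True by (simp add: W_def l0_def)
      finally have A: "W q (Suc k) x (u(k:=a)) i' = W q k x u i'" .
      show ?thesis using A True by auto
    next
      case False
      show ?thesis
      proof (cases "i' = i")
        case True
        then have nex: "\<not> (\<exists>l<k. q l (st q u l) = i)" using False by simp
        then have "\<not> L < k" using Lk by simp
        have "(LEAST l. l < Suc k \<and> q l (st q (u(k:=a)) l) = i') = k"
        proof (rule Least_equality)
          show "k < Suc k \<and> q k (st q (u(k:=a)) k) = i'" using True sc[of k] by (simp add: i_def)
        next
          fix y assume y: "y < Suc k \<and> q y (st q (u(k:=a)) y) = i'"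
          show "k \<le> y"
          proof (rule ccontr)
            assume "\<not> k \<le> y"
            then have "y < k" by simp
            then have "q y (st q u y) = i'" using y sc[of y] by simp
            then show False using False \<open>y < k\<close> by blast
          qed
        qed
        moreover have "\<exists>l<Suc k. q l (st q (u(k:=a)) l) = i'" using True sc[of k] by (auto simp: i_def)
        ultimately have "W q (Suc k) x (u(k:=a)) i' = st q (u(k:=a)) (Suc k) k" by (simp add: W_def)
        also have "\<dots> = a" using sS \<open>\<not> L < k\<close> by simp
        finally show ?thesis using nex True by auto
      next
        case False2: False
        have "\<not> (\<exists>l<Suc k. q l (st q (u(k:=a)) l) = i')"
        proof
          assume "\<exists>l<Suc k. q l (st q (u(k:=a)) l) = i'"
          then obtain l where l: "l < Suc k" "q l (st q (u(k:=a)) l) = i'" by blast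
          then have "q l (st q u l) = i'" using sc[of l] by simp
          show False
          proof (cases "l < k")
            case True
            then show False using False \<open>q l (st q u l) = i'\<close> by blast
          next
            case False
            then have "l = k" using l by simp
            then show False using False2 \<open>q l (st q u l) = i'\<close> by (simp add: i_def)
          qed
        qed
        then show ?thesis using False False2 by (auto simp: W_def)
      qed
    qed
  qed
qed




lemma W_new: "\<not> (\<exists>l<k. q l (st q u l) = i) \<Longrightarrow> (W q k x u)(i := a) = W q k (x(i:=a)) u"
  by (auto simp: W_def fun_eq_iff)

lemma W_preserve:
  assumes Q: "prob_space Q" and QM: "sets Q = sets M"
    and q_meas: "\<And>l. l < k \<Longrightarrow> q l \<in> measurable (PiM {..<l} (\<lambda>_. M)) (count_space UNIV)"
    and q_bnd: "\<And>l s. l < k \<Longrightarrow> s \<in> space (PiM {..<l} (\<lambda>_. M)) \<Longrightarrow> q l s < n"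
    and G[measurable]: "G \<in> borel_measurable (PiM {..<n} (\<lambda>_. Q))"
  shows "(\<integral>\<^sup>+ v. (\<integral>\<^sup>+ x. G (W q k x v) \<partial>PiM {..<n} (\<lambda>_. Q)) \<partial>PiM {..<k} (\<lambda>_. Q))
         = (\<integral>\<^sup>+ x. G x \<partial>PiM {..<n} (\<lambda>_. Q))"
  using q_meas q_bnd
proof (induction k)
  case 0
  interpret P0: prob_space "PiM {} (\<lambda>_. Q)" using Q by (intro prob_space_PiM) auto
  have "W q 0 x v = x" for x v by (simp add: W_def)
  then show ?case by (simp add: P0.emeasure_space_1)
next
  case (Suc k)
  interpret product_prob_space "\<lambda>_. Q" by (simp add: Q product_prob_space_def product_prob_space_axioms_def product_sigma_finite_def prob_space_imp_sigma_finite)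
  have spQ: "space Q = space M" using QM by (rule sets_eq_imp_space_eq)
  have setsP: "sets (PiM I (\<lambda>_. Q)) = sets (PiM I (\<lambda>_. M))" for I
    using QM by (intro sets_PiM_cong) auto
  have spP: "space (PiM I (\<lambda>_. Q)) = space (PiM I (\<lambda>_. M))" for I
    using setsP by (rule sets_eq_imp_space_eq)
  have WmQ: "(\<lambda>p. W q k' (snd p) (fst p)) \<in> measurable (PiM {..<k'} (\<lambda>_. Q) \<Otimes>\<^sub>M PiM {..<n} (\<lambda>_. Q)) (PiM {..<n} (\<lambda>_. Q))"
    if "k' \<le> Suc k" for k'
  proof -
    have "(\<lambda>p. W q k' (snd p) (fst p)) \<in> measurable (PiM {..<k'} (\<lambda>_. M) \<Otimes>\<^sub>M PiM {..<n} (\<lambda>_. M)) (PiM {..<n} (\<lambda>_. M))"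
      using that Suc.prems by (intro W_meas) auto
    moreover have "sets (PiM {..<k'} (\<lambda>_. Q) \<Otimes>\<^sub>M PiM {..<n} (\<lambda>_. Q)) = sets (PiM {..<k'} (\<lambda>_. M) \<Otimes>\<^sub>M PiM {..<n} (\<lambda>_. M))"
      using setsP by (intro sets_pair_measure_cong) auto
    ultimately show ?thesis using setsP measurable_cong_sets by metis
  qed
  have WmS[measurable]: "(\<lambda>p. W q (Suc k) (snd p) (fst p)) \<in> measurable (PiM {..<Suc k} (\<lambda>_. Q) \<Otimes>\<^sub>M PiM {..<n} (\<lambda>_. Q)) (PiM {..<n} (\<lambda>_. Q))"
    using WmQ by simp
  have WmK[measurable]: "(\<lambda>p. W q k (snd p) (fst p)) \<in> measurable (PiM {..<k} (\<lambda>_. Q) \<Otimes>\<^sub>M PiM {..<n} (\<lambda>_. Q)) (PiM {..<n} (\<lambda>_. Q))"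
    using WmQ by simp
  have IH: "(\<integral>\<^sup>+ v. (\<integral>\<^sup>+ x. G (W q k x v) \<partial>PiM {..<n} (\<lambda>_. Q)) \<partial>PiM {..<k} (\<lambda>_. Q))
         = (\<integral>\<^sup>+ x. G x \<partial>PiM {..<n} (\<lambda>_. Q))" using Suc by auto
  have Fm: "(\<lambda>v. \<integral>\<^sup>+ x. G (W q (Suc k) x v) \<partial>PiM {..<n} (\<lambda>_. Q)) \<in> borel_measurable (PiM (insert k {..<k}) (\<lambda>_. Q))"
  proof -
    interpret Pn: prob_space "PiM {..<n} (\<lambda>_. Q)" using Q by (intro prob_space_PiM) auto
    have "(\<lambda>p. G (W q (Suc k) (snd p) (fst p))) \<in> borel_measurable (PiM {..<Suc k} (\<lambda>_. Q) \<Otimes>\<^sub>M PiM {..<n} (\<lambda>_. Q))"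
      by (rule measurable_compose[OF WmS G])
    from Pn.borel_measurable_nn_integral_fst[OF this]
    have "(\<lambda>v. \<integral>\<^sup>+ x. G (W q (Suc k) x v) \<partial>PiM {..<n} (\<lambda>_. Q)) \<in> borel_measurable (PiM {..<Suc k} (\<lambda>_. Q))"
      by simp
    then show ?thesis by (simp add: lessThan_Suc)
  qed
  have "(\<integral>\<^sup>+ v. (\<integral>\<^sup>+ x. G (W q (Suc k) x v) \<partial>PiM {..<n} (\<lambda>_. Q)) \<partial>PiM {..<Suc k} (\<lambda>_. Q))
      = (\<integral>\<^sup>+ u. (\<integral>\<^sup>+ a. (\<integral>\<^sup>+ x. G (W q (Suc k) x (u(k:=a))) \<partial>PiM {..<n} (\<lambda>_. Q)) \<partial>Q) \<partial>PiM {..<k} (\<lambda>_. Q))"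
    unfolding lessThan_Suc by (rule product_nn_integral_insert[OF _ _ Fm]) auto
  also have "\<dots> = (\<integral>\<^sup>+ u. (\<integral>\<^sup>+ x. G (W q k x u) \<partial>PiM {..<n} (\<lambda>_. Q)) \<partial>PiM {..<k} (\<lambda>_. Q))"
  proof (rule nn_integral_cong)
    fix u assume u: "u \<in> space (PiM {..<k} (\<lambda>_. Q))"
    define i where "i = q k (st q u k)"
    have Hm: "(\<lambda>x. G (W q k x u)) \<in> borel_measurable (PiM {..<n} (\<lambda>_. Q))"
    proof -
      have "(\<lambda>x. (u, x)) \<in> measurable (PiM {..<n} (\<lambda>_. Q)) (PiM {..<k} (\<lambda>_. Q) \<Otimes>\<^sub>M PiM {..<n} (\<lambda>_. Q))"
        using u by measurable
      from measurable_compose[OF this measurable_compose[OF WmK G]] show ?thesis by simp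
    qed
    show "(\<integral>\<^sup>+ a. (\<integral>\<^sup>+ x. G (W q (Suc k) x (u(k:=a))) \<partial>PiM {..<n} (\<lambda>_. Q)) \<partial>Q)
        = (\<integral>\<^sup>+ x. G (W q k x u) \<partial>PiM {..<n} (\<lambda>_. Q))"
    proof (cases "\<exists>l<k. q l (st q u l) = i")
      case True
      then have "(\<integral>\<^sup>+ a. (\<integral>\<^sup>+ x. G (W q (Suc k) x (u(k:=a))) \<partial>PiM {..<n} (\<lambda>_. Q)) \<partial>Q)
           = (\<integral>\<^sup>+ a. (\<integral>\<^sup>+ x. G (W q k x u) \<partial>PiM {..<n} (\<lambda>_. Q)) \<partial>Q)"
        by (simp add: W_Suc i_def)
      also have "\<dots> = (\<integral>\<^sup>+ x. G (W q k x u) \<partial>PiM {..<n} (\<lambda>_. Q))"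
        by (simp add: prob_space.emeasure_space_1[OF Q])
      finally show ?thesis .
    next
      case False
      have "i < n" unfolding i_def
        using Suc.prems(2)[of k "st q u k"] st_space[of k u M q] u spP spQ by (auto simp: space_PiM)
      have "(\<integral>\<^sup>+ a. (\<integral>\<^sup>+ x. G (W q (Suc k) x (u(k:=a))) \<partial>PiM {..<n} (\<lambda>_. Q)) \<partial>Q)
           = (\<integral>\<^sup>+ a. (\<integral>\<^sup>+ x. G (W q k (x(i:=a)) u) \<partial>PiM {..<n} (\<lambda>_. Q)) \<partial>Q)"
      proof -
        have "W q (Suc k) x (u(k:=a)) = (W q k x u)(i := a)" for x a
          unfolding W_Suc i_def[symmetric] using False by (rule if_not_P)
        then show ?thesis using W_new[of k q u i, OF False] by simp
      qed
      also have "\<dots> = (\<integral>\<^sup>+ x. G (W q k x u) \<partial>PiM {..<n} (\<lambda>_. Q))"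
        using repl_coord[OF Q, of "{..<n}" i "\<lambda>x. G (W q k x u)"] Hm \<open>i < n\<close> by simp
      finally show ?thesis .
    qed
  qed
  also have "\<dots> = (\<integral>\<^sup>+ x. G x \<partial>PiM {..<n} (\<lambda>_. Q))" by (rule IH)
  finally show ?case .
qed




lemma reduce:
  assumes P_prob: "\<And>\<theta>. \<theta> \<in> \<Theta> \<Longrightarrow> prob_space (P \<theta>)"
    and P_sets: "\<And>\<theta>. \<theta> \<in> \<Theta> \<Longrightarrow> sets (P \<theta>) = sets M"
    and L_meas: "\<And>\<theta>. \<theta> \<in> \<Theta> \<Longrightarrow> (\<lambda>y. L y \<theta>) \<in> borel_measurable N"
    and f_meas: "f \<in> measurable (PiM {..<n} (\<lambda>_. M)) N"
    and comp: "computable_reading M N n k f"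
  shows "minimax M N P L \<Theta> k \<le> sup_risk P L \<Theta> n f"
proof -
  obtain q out where
      q_meas: "\<And>j. j < k \<Longrightarrow> q j \<in> measurable (PiM {..<j} (\<lambda>_. M)) (count_space UNIV)"
    and q_bnd: "\<And>j v. j < k \<Longrightarrow> v \<in> space (PiM {..<j} (\<lambda>_. M)) \<Longrightarrow> q j v < n"
    and out_meas: "out \<in> measurable (PiM {..<k} (\<lambda>_. M)) N"
    and f_eq: "\<And>x. x \<in> space (PiM {..<n} (\<lambda>_. M)) \<Longrightarrow> f x = out (reads q x k)"
    using comp unfolding computable_reading_def by blast
  define g where "g v = out (st q v k)" for v
  have g_meas: "g \<in> measurable (PiM {..<k} (\<lambda>_. M)) N"
    unfolding g_def using measurable_compose[OF st_meas[of k k q M] out_meas] q_meas by simp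
  have Wsp: "W q k x v \<in> space (PiM {..<n} (\<lambda>_. M))"
    if "v \<in> space (PiM {..<k} (\<lambda>_. M))" "x \<in> space (PiM {..<n} (\<lambda>_. M))" for x v
    using measurable_space[OF W_meas[of k q M n], of "(v, x)"] q_meas q_bnd that
    by (auto simp: space_pair_measure)
  have risk_eq: "risk P L n f \<theta> = risk P L k g \<theta>" if th: "\<theta> \<in> \<Theta>" for \<theta>
  proof -
    let ?Q = "P \<theta>"
    have Q: "prob_space ?Q" using P_prob th by simp
    have QM: "sets ?Q = sets M" using P_sets th by simp
    have setsP: "sets (PiM I (\<lambda>_. ?Q)) = sets (PiM I (\<lambda>_. M))" for I
      using QM by (intro sets_PiM_cong) auto
    have spP: "space (PiM I (\<lambda>_. ?Q)) = space (PiM I (\<lambda>_. M))" for I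
      using setsP by (rule sets_eq_imp_space_eq)
    have fQ: "f \<in> measurable (PiM {..<n} (\<lambda>_. ?Q)) N" using f_meas setsP measurable_cong_sets by metis
    have Lm: "(\<lambda>y. L y \<theta>) \<in> borel_measurable N" using L_meas th by simp
    have Gm: "(\<lambda>x. ennreal (L (f x) \<theta>)) \<in> borel_measurable (PiM {..<n} (\<lambda>_. ?Q))"
      using measurable_compose[OF fQ Lm] by measurable
    have "risk P L n f \<theta> = (\<integral>\<^sup>+ x. ennreal (L (f x) \<theta>) \<partial>PiM {..<n} (\<lambda>_. ?Q))"
      by (simp add: risk_def)
    also have "\<dots> = (\<integral>\<^sup>+ v. (\<integral>\<^sup>+ x. ennreal (L (f (W q k x v)) \<theta>) \<partial>PiM {..<n} (\<lambda>_. ?Q)) \<partial>PiM {..<k} (\<lambda>_. ?Q))"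
      by (rule W_preserve[OF Q QM q_meas q_bnd Gm, symmetric]) auto
    also have "\<dots> = (\<integral>\<^sup>+ v. (\<integral>\<^sup>+ x. ennreal (L (g v) \<theta>) \<partial>PiM {..<n} (\<lambda>_. ?Q)) \<partial>PiM {..<k} (\<lambda>_. ?Q))"
    proof (intro nn_integral_cong)
      fix v x assume v: "v \<in> space (PiM {..<k} (\<lambda>_. ?Q))" and x: "x \<in> space (PiM {..<n} (\<lambda>_. ?Q))"
      have v': "v \<in> space (PiM {..<k} (\<lambda>_. M))" using v spP[of "{..<k}"] by metis
      have x': "x \<in> space (PiM {..<n} (\<lambda>_. M))" using x spP[of "{..<n}"] by metis
      have "f (W q k x v) = out (reads q (W q k x v) k)" by (rule f_eq[OF Wsp[OF v' x']])
      also have "\<dots> = g v" by (simp add: reads_W g_def)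
      finally show "ennreal (L (f (W q k x v)) \<theta>) = ennreal (L (g v) \<theta>)" by simp
    qed
    also have "\<dots> = (\<integral>\<^sup>+ v. ennreal (L (g v) \<theta>) \<partial>PiM {..<k} (\<lambda>_. ?Q))"
    proof -
      interpret Pn: prob_space "PiM {..<n} (\<lambda>_. ?Q)" using Q by (intro prob_space_PiM) auto
      show ?thesis by (simp add: Pn.emeasure_space_1)
    qed
    also have "\<dots> = risk P L k g \<theta>" by (simp add: risk_def)
    finally show ?thesis .
  qed
  have "minimax M N P L \<Theta> k \<le> sup_risk P L \<Theta> k g"
    unfolding minimax_def using g_meas by (rule INF_lower)
  also have "\<dots> = sup_risk P L \<Theta> n f"
    unfolding sup_risk_def using risk_eq by simp
  finally show ?thesis .
qed

lemma minimax_mono: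
  assumes P_prob: "\<And>\<theta>. \<theta> \<in> \<Theta> \<Longrightarrow> prob_space (P \<theta>)"
    and P_sets: "\<And>\<theta>. \<theta> \<in> \<Theta> \<Longrightarrow> sets (P \<theta>) = sets M"
    and L_meas: "\<And>\<theta>. \<theta> \<in> \<Theta> \<Longrightarrow> (\<lambda>y. L y \<theta>) \<in> borel_measurable N"
    and mn: "m \<le> n"
  shows "minimax M N P L \<Theta> n \<le> minimax M N P L \<Theta> m"
  unfolding minimax_def
proof (rule INF_greatest)
  fix f assume f: "f \<in> measurable (PiM {..<m} (\<lambda>_. M)) N"
  define g where "g x = f (restrict x {..<m})" for x
  have g_meas: "g \<in> measurable (PiM {..<n} (\<lambda>_. M)) N"
    unfolding g_def using mn by (intro measurable_compose[OF measurable_restrict_subset f]) auto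
  have "risk P L n g \<theta> = risk P L m f \<theta>" if th: "\<theta> \<in> \<Theta>" for \<theta>
  proof -
    let ?Q = "P \<theta>"
    interpret product_prob_space "\<lambda>_. ?Q" using P_prob th
      by (simp add: product_prob_space_def product_prob_space_axioms_def product_sigma_finite_def prob_space_imp_sigma_finite)
    have QM: "sets ?Q = sets M" using P_sets th by simp
    have setsP: "sets (PiM I (\<lambda>_. ?Q)) = sets (PiM I (\<lambda>_. M))" for I
      using QM by (intro sets_PiM_cong) auto
    have fQ: "f \<in> measurable (PiM {..<m} (\<lambda>_. ?Q)) N" using f setsP measurable_cong_sets by metis
    have Lm: "(\<lambda>y. L y \<theta>) \<in> borel_measurable N" using L_meas th by simp
    have Gm: "(\<lambda>x. ennreal (L (f x) \<theta>)) \<in> borel_measurable (PiM {..<m} (\<lambda>_. ?Q))"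
      using measurable_compose[OF fQ Lm] by measurable
    have "risk P L m f \<theta> = (\<integral>\<^sup>+ x. ennreal (L (f x) \<theta>) \<partial>distr (PiM {..<n} (\<lambda>_. ?Q)) (PiM {..<m} (\<lambda>_. ?Q)) (\<lambda>x. restrict x {..<m}))"
      unfolding risk_def using distr_restrict[of "{..<m}" "{..<n}"] mn by simp
    also have "\<dots> = risk P L n g \<theta>"
      unfolding risk_def g_def using mn by (subst nn_integral_distr) (auto intro: Gm measurable_restrict_subset)
    finally show ?thesis by simp
  qed
  then have "sup_risk P L \<Theta> n g = sup_risk P L \<Theta> m f" unfolding sup_risk_def by simp
  moreover have "(INF f \<in> measurable (PiM {..<n} (\<lambda>_. M)) N. sup_risk P L \<Theta> n f) \<le> sup_risk P L \<Theta> n g"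
    using g_meas by (rule INF_lower)
  ultimately show "(INF f \<in> measurable (PiM {..<n} (\<lambda>_. M)) N. sup_risk P L \<Theta> n f) \<le> sup_risk P L \<Theta> m f" by simp
qed




theorem theorem4:
  fixes M :: "'x measure" and N :: "'b measure" and P :: "'t \<Rightarrow> 'x measure"
    and \<Theta> :: "'t set" and L :: "'b \<Rightarrow> 't \<Rightarrow> real"
    and \<phi> :: "nat \<Rightarrow> (nat \<Rightarrow> 'x) \<Rightarrow> 'b"
  assumes P_prob: "\<And>\<theta>. \<theta> \<in> \<Theta> \<Longrightarrow> prob_space (P \<theta>)"
    and P_sets: "\<And>\<theta>. \<theta> \<in> \<Theta> \<Longrightarrow> sets (P \<theta>) = sets M"
    and L_meas: "\<And>\<theta>. \<theta> \<in> \<Theta> \<Longrightarrow> (\<lambda>y. L y \<theta>) \<in> borel_measurable N"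
    and L_nonneg: "\<And>y \<theta>. y \<in> space N \<Longrightarrow> \<theta> \<in> \<Theta> \<Longrightarrow> L y \<theta> \<ge> 0"
    and R_fin_pos: "\<forall>\<^sub>F n in sequentially. 0 < minimax M N P L \<Theta> n \<and> minimax M N P L \<Theta> n < \<infinity>"
    and R_decay: "Limsup at_top (\<lambda>a::real. limsup (\<lambda>n.
                     minimax M N P L \<Theta> (nat \<lfloor>a * real n\<rfloor>) / minimax M N P L \<Theta> n)) = 0"
    and \<phi>_meas: "\<And>n. \<phi> n \<in> measurable (PiM {..<n} (\<lambda>_. M)) N"
    and \<phi>_fast: "sublinear_time M N \<phi>"
  shows "((\<lambda>n. sup_risk P L \<Theta> n (\<phi> n) / minimax M N P L \<Theta> n) \<longlongrightarrow> \<infinity>) sequentially"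
proof -
  define R where "R = minimax M N P L \<Theta>"
  define S where "S n = sup_risk P L \<Theta> n (\<phi> n)" for n
  obtain b :: "nat \<Rightarrow> nat" where b0: "(\<lambda>n. real (b n) / real n) \<longlonglongrightarrow> 0"
    and evc: "\<forall>\<^sub>F n in sequentially. computable_reading M N n (b n) (\<phi> n)"
    using \<phi>_fast unfolding sublinear_time_def by blast
  have red: "\<forall>\<^sub>F n in sequentially. R (b n) \<le> S n"
    using evc unfolding R_def S_def
    by eventually_elim (rule reduce[OF P_prob P_sets L_meas \<phi>_meas])
  have mono: "m \<le> n \<Longrightarrow> R n \<le> R m" for m n
    unfolding R_def by (rule minimax_mono[OF P_prob P_sets L_meas])
  have "((\<lambda>n. S n / R n) \<longlongrightarrow> top) sequentially"
    unfolding tendsto_top_iff_ennreal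
  proof (intro allI impI)
    fix c :: real assume c: "0 \<le> c"
    define \<epsilon> where "\<epsilon> = ennreal (1 / (c + 1))"
    have \<epsilon>pos: "0 < \<epsilon>" using c by (simp add: \<epsilon>_def)
    have "\<forall>\<^sub>F a in at_top. limsup (\<lambda>n. R (nat \<lfloor>a * real n\<rfloor>) / R n) < \<epsilon>"
      by (rule Limsup_lessD) (use R_decay \<epsilon>pos in \<open>simp add: R_def\<close>)
    then obtain a0 :: real where a0: "\<And>a. a \<ge> a0 \<Longrightarrow> limsup (\<lambda>n. R (nat \<lfloor>a * real n\<rfloor>) / R n) < \<epsilon>"
      by (auto simp: eventually_at_top_linorder)
    define a where "a = max a0 1"
    have a1: "a \<ge> 1" by (simp add: a_def)
    have "\<forall>\<^sub>F n in sequentially. R (nat \<lfloor>a * real n\<rfloor>) / R n < \<epsilon>"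
      by (rule Limsup_lessD) (use a0[of a] in \<open>simp add: a_def\<close>)
    then have "\<forall>\<^sub>F m in sequentially. R (nat \<lfloor>a * real m\<rfloor>) / R m < \<epsilon> \<and> 0 < R m \<and> R m < \<infinity>"
      using R_fin_pos unfolding R_def by eventually_elim auto
    then obtain M0 where M0: "\<And>m. m \<ge> M0 \<Longrightarrow> R (nat \<lfloor>a * real m\<rfloor>) / R m < \<epsilon> \<and> 0 < R m \<and> R m < \<infinity>"
      by (auto simp: eventually_sequentially)
    have ev1: "\<forall>\<^sub>F n in sequentially. real (b n) / real n < 1 / a"
      using b0 a1 by (intro order_tendstoD(2)) auto
    have ev2: "\<forall>\<^sub>F n in sequentially. a * real M0 \<le> real n \<and> M0 \<le> n \<and> 0 < n"
    proof -
      have "\<forall>\<^sub>F n in sequentially. n \<ge> max (nat \<lceil>a * real M0\<rceil>) (max M0 1)"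
        by (rule eventually_ge_at_top)
      then show ?thesis
      proof eventually_elim
        case (elim n)
        have "a * real M0 \<le> real (nat \<lceil>a * real M0\<rceil>)" by linarith
        also have "\<dots> \<le> real n" using elim by simp
        finally show ?case using elim by simp
      qed
    qed
    show "\<forall>\<^sub>F n in sequentially. ennreal c < S n / R n"
      using ev1 ev2 red
    proof eventually_elim
      case (elim n)
      then have n0: "0 < n" and nM0: "M0 \<le> n" and aM0: "a * real M0 \<le> real n" by auto
      have abn: "a * real (b n) \<le> real n"
        using elim(1) n0 a1 by (simp add: field_simps)
      define m where "m = max (b n) M0"
      have am: "a * real m \<le> real n" using abn aM0 by (simp add: m_def max_def)
      have fl: "nat \<lfloor>a * real m\<rfloor> \<le> n"
        using am by (simp add: nat_le_iff floor_le_iff)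
      have Mm: "R (nat \<lfloor>a * real m\<rfloor>) / R m < \<epsilon>" "0 < R m" "R m < \<infinity>" using M0[of m] by (auto simp: m_def)
      have Rn: "0 < R n" "R n < \<infinity>" using M0[OF nM0] by auto
      have "R n \<le> R (nat \<lfloor>a * real m\<rfloor>)" using fl by (rule mono)
      also have "\<dots> < \<epsilon> * R m" using Mm divide_less_ennreal[of "R m"] by auto
      also have "\<dots> \<le> \<epsilon> * R (b n)" using mono[of "b n" m] by (intro mult_left_mono) (auto simp: m_def)
      also have "\<dots> \<le> \<epsilon> * S n" using elim(3) by (intro mult_left_mono) auto
      finally have lt: "R n < \<epsilon> * S n" .
      show ?case
      proof (cases "S n = \<infinity>")
        case True
        then show ?thesis using Rn by (simp add: ennreal_top_divide)
      next
        case False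
        obtain r where r: "R n = ennreal r" "0 < r" using Rn by (cases "R n") (auto simp: ennreal_less_zero_iff)
        obtain s where s: "S n = ennreal s" "0 \<le> s" using False by (cases "S n") auto
        have "ennreal r < ennreal (1 / (c + 1) * s)"
          using lt c s r by (simp add: \<epsilon>_def ennreal_mult[symmetric])
        moreover have "0 \<le> 1 / (c + 1) * s" using c s by simp
        ultimately have "r < s / (c + 1)" using r(2) ennreal_less_iff by simp
        then have "c < s / r" using c r by (simp add: field_simps)
        then have "ennreal c < ennreal (s / r)" using c by (simp add: ennreal_lessI)
        then show ?thesis using r s by (simp add: divide_ennreal)
      qed
    qed
  qed
  then show ?thesis by (simp add: R_def S_def)
qed


end
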